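(* Let $f\in C^1$ and suppose that for every $a\in\mathbb R$ the initial value problem $v_{xx}+f(x,v,v_x)=0$, $v(0)=a$, $v_x(0)=0$ has a solution $v(\cdot,a)$ on $[0,1]$. Let $v_j,v_k$ be two solutions of the Neumann problem $v_{xx}+f(x,v,v_x)=0$, $v_x(0)=v_x(1)=0$, with $a_j:=v_j(0)<a_k:=v_k(0)$. Set $w(x):=(v_k(x)-v_j(x))/(a_k-a_j)$, and let $\vartheta:[0,1]\to\mathbb R$ be the continuous function with $\vartheta(0)=0$ such that $w=\rho\cos\vartheta$, $w_x=-\rho\sin\vartheta$ for some $\rho>0$ (clockwise Prüfer angle; $(w,w_x)$ never vanishes since $w$ is a nontrivial solution of a linear second order ODE with $w(0)=1$, $w_x(0)=0$). Then $\vartheta(1)/\pi$ is an integer and $$z(v_k-v_j)=\vartheta(1)/\pi,$$ where $z(\varphi)$ denotes the number of strict sign changes of $\varphi$ on $[0,1]$. *)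

theory Defs
  imports "HOL-Analysis.Analysis" "HOL-Library.Extended_Nat"
begin

definition C1_fun :: "(real \<times> real \<times> real \<Rightarrow> real) \<Rightarrow> bool" where
  "C1_fun f \<longleftrightarrow> (\<exists>f'. (\<forall>z. (f has_derivative blinfun_apply (f' z)) (at z)) \<and> continuous_on UNIV f')"

definition solves_ode :: "(real \<times> real \<times> real \<Rightarrow> real) \<Rightarrow> (real \<Rightarrow> real) \<Rightarrow> (real \<Rightarrow> real) \<Rightarrow> bool" where
  "solves_ode f v v' \<longleftrightarrow>
     (\<forall>x\<in>{0..1}. (v has_real_derivative v' x) (at x within {0..1}) \<and>
                 (v' has_real_derivative (- f (x, v x, v' x))) (at x within {0..1}))"

definition sign_changes :: "(real \<Rightarrow> real) \<Rightarrow> enat" where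
  "sign_changes \<phi> = Sup {enat k | k. \<exists>xs :: nat \<Rightarrow> real.
      (\<forall>i\<le>k. 0 \<le> xs i \<and> xs i \<le> 1) \<and>
      (\<forall>i<k. xs i < xs (Suc i) \<and> \<phi> (xs i) * \<phi> (xs (Suc i)) < 0)}"

end

theory Submission
  imports Defs
begin

locale prufer =
  fixes \<theta> \<rho> w w' :: "real \<Rightarrow> real"
  assumes cont: "continuous_on {0..1} \<theta>"
  and pol: "\<And>x. x \<in> {0..1} \<Longrightarrow> \<rho> x > 0 \<and> w x = \<rho> x * cos (\<theta> x) \<and> w' x = - \<rho> x * sin (\<theta> x)"
  and der: "\<And>x. x \<in> {0..1} \<Longrightarrow> (w has_real_derivative w' x) (at x within {0..1})"
  and th0: "\<theta> 0 = 0" and d1: "w' 1 = 0"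
begin

lemma sin_pos_small: fixes t :: real assumes "sin t > 0" "\<bar>t\<bar> < pi/2" shows "t > 0"
proof (rule ccontr)
  assume "\<not> t > 0"
  then have "sin (-t) \<ge> 0" using assms by (intro sin_ge_zero) auto
  then show False using assms by simp
qed

lemma local_beh:
  assumes x0: "x0 \<in> {0..1}" "cos (\<theta> x0) = 0"
  shows "\<exists>d>0. \<forall>y\<in>{0..1}. (x0 < y \<and> y < x0 + d \<longrightarrow> \<theta> y > \<theta> x0) \<and> (x0 - d < y \<and> y < x0 \<longrightarrow> \<theta> y < \<theta> x0)"
proof -
  have s2: "(sin (\<theta> x0))^2 = 1" using sin_cos_squared_add[of "\<theta> x0"] x0 by simp
  have x0ne0: "x0 \<noteq> 0" using th0 x0 by auto
  have x0ne1: "x0 \<noteq> 1"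
  proof
    assume "x0 = 1"
    then have "sin (\<theta> x0) = 0" using pol[of 1] d1 by auto
    with s2 show False by simp
  qed
  have int: "x0 \<in> interior {0..1}" using x0 x0ne0 x0ne1 by (auto simp: interior_atLeastAtMost_real)
  have D: "(w has_real_derivative w' x0) (at x0)"
    using der[OF x0(1)] at_within_interior[OF int] by simp
  let ?g = "\<lambda>y. w y * w' x0"
  have Dg: "(?g has_real_derivative (w' x0 * w' x0)) (at x0)"
    using DERIV_cmult_right[OF D, of "w' x0"] by simp
  have "w' x0 \<noteq> 0" using pol[OF x0(1)] s2 by auto
  then have pos: "w' x0 * w' x0 > 0" by (metis not_real_square_gt_zero)
  have g0: "?g x0 = 0" using pol[OF x0(1)] x0 by simp
  obtain d1 where d1: "d1 > 0" "\<forall>h>0. h < d1 \<longrightarrow> ?g x0 < ?g (x0 + h)"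
    using DERIV_pos_inc_right[OF Dg pos] by blast
  obtain d2 where d2: "d2 > 0" "\<forall>h>0. h < d2 \<longrightarrow> ?g (x0 - h) < ?g x0"
    using DERIV_pos_inc_left[OF Dg pos] by blast
  obtain d3 where d3: "d3 > 0" "\<forall>y\<in>{0..1}. dist y x0 < d3 \<longrightarrow> dist (\<theta> y) (\<theta> x0) < pi/2"
    using cont x0(1) unfolding continuous_on_iff by (meson pi_half_gt_zero)
  have key: "?g y = \<rho> y * \<rho> x0 * sin (\<theta> y - \<theta> x0)" if y: "y \<in> {0..1}" for y
  proof -
    have "cos (\<theta> y) = cos ((\<theta> y - \<theta> x0) + \<theta> x0)" by simp
    also have "\<dots> = - sin (\<theta> y - \<theta> x0) * sin (\<theta> x0)"
      unfolding cos_add using x0 by simp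
    finally have c: "cos (\<theta> y) = - sin (\<theta> y - \<theta> x0) * sin (\<theta> x0)" .
    have "?g y = \<rho> y * \<rho> x0 * sin (\<theta> y - \<theta> x0) * (sin (\<theta> x0))^2"
      using pol[OF y] pol[OF x0(1)] c by (simp add: power2_eq_square)
    then show ?thesis using s2 by simp
  qed
  define d where "d = min d1 (min d2 d3)"
  have "d > 0" using d1 d2 d3 by (simp add: d_def)
  moreover have "\<forall>y\<in>{0..1}. (x0 < y \<and> y < x0 + d \<longrightarrow> \<theta> y > \<theta> x0) \<and> (x0 - d < y \<and> y < x0 \<longrightarrow> \<theta> y < \<theta> x0)"
  proof (intro ballI conjI impI)
    fix y :: real assume y: "y \<in> {0..1}" and a: "x0 < y \<and> y < x0 + d"
    have rp: "\<rho> y * \<rho> x0 > 0" using pol[OF y] pol[OF x0(1)] by simp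
    have "y - x0 > 0" "y - x0 < d1" using a unfolding d_def by auto
    then have "?g x0 < ?g (x0 + (y - x0))" using d1(2) by blast
    then have "?g y > 0" using g0 by simp
    then have "sin (\<theta> y - \<theta> x0) > 0" using key[OF y] rp by (metis mult_less_cancel_left_pos mult_zero_right)
    moreover have "\<bar>\<theta> y - \<theta> x0\<bar> < pi/2" using d3 y a unfolding d_def by (auto simp: dist_real_def)
    ultimately show "\<theta> y > \<theta> x0" using sin_pos_small by force
  next
    fix y :: real assume y: "y \<in> {0..1}" and a: "x0 - d < y \<and> y < x0"
    have rp: "\<rho> y * \<rho> x0 > 0" using pol[OF y] pol[OF x0(1)] by simp
    have "x0 - y > 0" "x0 - y < d2" using a unfolding d_def by auto
    then have "?g (x0 - (x0 - y)) < ?g x0" using d2(2) by blast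
    then have "?g y < 0" using g0 by simp
    then have "sin (\<theta> y - \<theta> x0) < 0" using key[OF y] rp by (metis mult_less_cancel_left_pos mult_zero_right)
    then have "sin (\<theta> x0 - \<theta> y) > 0" by (metis minus_diff_eq neg_0_less_iff_less sin_minus)
    moreover have "\<bar>y - x0\<bar> < d3" using a unfolding d_def by auto
    then have "\<bar>\<theta> y - \<theta> x0\<bar> < pi/2" using d3 y by (auto simp: dist_real_def)
    then have "\<bar>\<theta> x0 - \<theta> y\<bar> < pi/2" by linarith
    ultimately show "\<theta> y < \<theta> x0" using sin_pos_small by force
  qed
  ultimately show ?thesis by blast
qed

lemma after:
  assumes x0: "x0 \<in> {0..1}" "cos (\<theta> x0) = 0" and y: "y \<in> {0..1}" "x0 < y"
  shows "\<theta> y > \<theta> x0"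
proof (rule ccontr)
  assume "\<not> \<theta> y > \<theta> x0"
  hence ty: "\<theta> y \<le> \<theta> x0" by simp
  obtain d where d: "d > 0" "\<forall>y\<in>{0..1}. (x0 < y \<and> y < x0 + d \<longrightarrow> \<theta> y > \<theta> x0) \<and> (x0 - d < y \<and> y < x0 \<longrightarrow> \<theta> y < \<theta> x0)"
    using local_beh[OF x0] by blast
  define p where "p = x0 + min (d/2) ((y - x0)/2)"
  have "min (d/2) ((y - x0)/2) > 0" "min (d/2) ((y - x0)/2) \<le> (y - x0)/2" "min (d/2) ((y - x0)/2) < d"
    using d y by (auto simp: min_def)
  then have p: "x0 < p" "p < y" "p \<in> {0..1}" "p < x0 + d" using y x0 by (auto simp: p_def)
  have tp: "\<theta> p > \<theta> x0" using d(2) p by auto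
  define T where "T = {t \<in> {p..y}. \<theta> t = \<theta> x0}"
  have cpy: "continuous_on {p..y} \<theta>" using cont p y by (auto intro: continuous_on_subset)
  have "T \<noteq> {}" using IVT2'[of \<theta> y "\<theta> x0" p, OF ty] tp p cpy by (auto simp: T_def)
  moreover have "closed T" unfolding T_def
    by (rule continuous_closed_preimage_constant[OF cpy]) auto
  moreover have "bdd_below T" by (auto simp: T_def bdd_below_def)
  ultimately have tT: "Inf T \<in> T" by (intro closed_contains_Inf)
  define t where "t = Inf T"
  have t: "t \<in> {p..y}" "\<theta> t = \<theta> x0" using tT by (auto simp: T_def t_def)
  have tgt: "t > p" using t tp by (cases "t = p") auto
  have t01: "t \<in> {0..1}" using t p y by auto
  obtain d' where d': "d' > 0" "\<forall>y\<in>{0..1}. (t < y \<and> y < t + d' \<longrightarrow> \<theta> y > \<theta> t) \<and> (t - d' < y \<and> y < t \<longrightarrow> \<theta> y < \<theta> t)"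
    using local_beh[OF t01] t x0 by auto
  define q where "q = max p (t - d'/2)"
  have q: "p \<le> q" "q < t" "t - d' < q" "q \<in> {0..1}" using tgt d' p t01 by (auto simp: q_def)
  have tq: "\<theta> q < \<theta> x0" using d'(2) q t by auto
  have cpq: "continuous_on {p..q} \<theta>" using cont p q by (auto intro: continuous_on_subset)
  obtain r where r: "p \<le> r" "r \<le> q" "\<theta> r = \<theta> x0"
    using IVT2'[of \<theta> q "\<theta> x0" p] tq tp q(1) cpq by auto
  have "r \<in> T" using r q t by (auto simp: T_def)
  then have "t \<le> r" unfolding t_def by (rule cInf_lower) (auto simp: T_def bdd_below_def)
  then show False using r q by simp
qed

lemma before:
  assumes x0: "x0 \<in> {0..1}" "cos (\<theta> x0) = 0" and y: "y \<in> {0..1}" "y < x0"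
  shows "\<theta> y < \<theta> x0"
proof (rule ccontr)
  assume "\<not> \<theta> y < \<theta> x0"
  hence ty: "\<theta> x0 \<le> \<theta> y" by simp
  obtain d where d: "d > 0" "\<forall>y\<in>{0..1}. (x0 < y \<and> y < x0 + d \<longrightarrow> \<theta> y > \<theta> x0) \<and> (x0 - d < y \<and> y < x0 \<longrightarrow> \<theta> y < \<theta> x0)"
    using local_beh[OF x0] by blast
  define q where "q = max y (x0 - d/2)"
  have q: "y \<le> q" "q < x0" "x0 - d < q" "q \<in> {0..1}" using d y x0 by (auto simp: q_def)
  have tq: "\<theta> q < \<theta> x0" using d(2) q by auto
  have cyq: "continuous_on {y..q} \<theta>" using cont q y by (auto intro: continuous_on_subset)
  obtain r where r: "y \<le> r" "r \<le> q" "\<theta> r = \<theta> x0"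
    using IVT2'[of \<theta> q "\<theta> x0" y] tq ty q(1) cyq by auto
  have "\<theta> x0 > \<theta> r" using after[of r x0] r q x0 y by auto
  then show False using r by simp
qed

definition m :: "real \<Rightarrow> int" where "m x = \<lfloor>\<theta> x / pi + 1/2\<rfloor>"

definition L :: "int \<Rightarrow> real" where "L j = of_int j * pi - pi/2"

lemma cosL: "cos (L j) = 0"
proof -
  have "cos (L j) = sin (of_int j * pi)" unfolding L_def by (simp add: cos_diff)
  then show ?thesis by (simp add: sin_zero_iff_int2)
qed

lemma m_bounds: "L (m x) \<le> \<theta> x" "\<theta> x < L (m x + 1)"
proof -
  have a: "of_int (m x) \<le> \<theta> x / pi + 1/2" "\<theta> x / pi + 1/2 < of_int (m x) + 1"
    unfolding m_def by linarith+
  have "of_int (m x) * pi \<le> (\<theta> x / pi + 1/2) * pi"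
    using a(1) by (intro mult_right_mono) auto
  then show "L (m x) \<le> \<theta> x" by (simp add: L_def algebra_simps)
  have "(\<theta> x / pi + 1/2) * pi < (of_int (m x) + 1) * pi"
    using a(2) by (intro mult_strict_right_mono) auto
  then show "\<theta> x < L (m x + 1)" by (simp add: L_def algebra_simps)
qed

lemma L_mono: "i \<le> j \<Longrightarrow> L i \<le> L j"
  unfolding L_def by (simp add: mult_right_mono)

lemma m_mono: assumes "x \<in> {0..1}" "y \<in> {0..1}" "x \<le> y" shows "m x \<le> m y"
proof (rule ccontr)
  assume "\<not> m x \<le> m y"
  then have "m y + 1 \<le> m x" by simp
  then have a: "\<theta> y < L (m x)" using m_bounds(2)[of y] L_mono by (meson less_le_trans)
  have b: "L (m x) \<le> \<theta> x" by (rule m_bounds(1))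
  have cxy: "continuous_on {x..y} \<theta>" using cont assms by (auto intro: continuous_on_subset)
  obtain t where t: "x \<le> t" "t \<le> y" "\<theta> t = L (m x)"
    using IVT2'[of \<theta> y "L (m x)" x] a b assms(3) cxy by auto
  have "t \<noteq> y" using t a by auto
  then have "\<theta> y > \<theta> t" using after[of t y] t assms cosL by auto
  then show False using t a by simp
qed

lemma m_same_sign: assumes "m x1 = m x2" shows "cos (\<theta> x1) * cos (\<theta> x2) \<ge> 0"
proof -
  have c: "cos (\<theta> x) = cos (\<theta> x - of_int (m x) * pi) * cos (of_int (m x) * pi)"
    and p: "cos (\<theta> x - of_int (m x) * pi) \<ge> 0" for x
  proof -
    have "sin (of_int (m x) * pi) = 0" by (simp add: sin_zero_iff_int2)
    then show "cos (\<theta> x) = cos (\<theta> x - of_int (m x) * pi) * cos (of_int (m x) * pi)"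
      using cos_add[of "\<theta> x - of_int (m x) * pi" "of_int (m x) * pi"] by simp
    show "cos (\<theta> x - of_int (m x) * pi) \<ge> 0"
      using m_bounds[of x] by (intro cos_ge_zero) (auto simp: L_def algebra_simps)
  qed
  have "cos (\<theta> x1) * cos (\<theta> x2) = cos (\<theta> x1 - of_int (m x1) * pi) * cos (\<theta> x2 - of_int (m x2) * pi) * (cos (of_int (m x1) * pi))^2"
    using c[of x1] c[of x2] assms by (simp add: power2_eq_square)
  also have "\<dots> \<ge> 0" using p[of x1] p[of x2] by simp
  finally show ?thesis .
qed

end


lemma neg1_pow_prod: "(-1::real)^i * (-1)^(Suc i) = -1"
  by (induction i) auto

theorem lemma5p1:
  fixes f :: "real \<times> real \<times> real \<Rightarrow> real"
    and vj vj' vk vk' \<theta> \<rho> :: "real \<Rightarrow> real"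
  assumes C1: "C1_fun f"
    and IVP: "\<forall>a. \<exists>v v'. solves_ode f v v' \<and> v 0 = a \<and> v' 0 = 0"
    and sol_j: "solves_ode f vj vj'" "vj' 0 = 0" "vj' 1 = 0"
    and sol_k: "solves_ode f vk vk'" "vk' 0 = 0" "vk' 1 = 0"
    and less: "vj 0 < vk 0"
    and theta_cont: "continuous_on {0..1} \<theta>"
    and theta0: "\<theta> 0 = 0"
    and polar: "\<forall>x\<in>{0..1}. \<rho> x > 0 \<and>
        (vk x - vj x) / (vk 0 - vj 0) = \<rho> x * cos (\<theta> x) \<and>
        (vk' x - vj' x) / (vk 0 - vj 0) = - \<rho> x * sin (\<theta> x)"
  shows "\<exists>n::nat. \<theta> 1 / pi = real n \<and> sign_changes (\<lambda>x. vk x - vj x) = enat n"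
proof -
  define a where "a = vk 0 - vj 0"
  have a: "a > 0" using less by (simp add: a_def)
  define w where "w = (\<lambda>x. (vk x - vj x) / a)"
  define w' where "w' = (\<lambda>x. (vk' x - vj' x) / a)"
  interpret P: prufer \<theta> \<rho> w w'
  proof
    show "continuous_on {0..1} \<theta>" by (rule theta_cont)
    show "\<rho> x > 0 \<and> w x = \<rho> x * cos (\<theta> x) \<and> w' x = - \<rho> x * sin (\<theta> x)" if "x \<in> {0..1}" for x
      using polar that by (simp add: w_def w'_def a_def)
    show "(w has_real_derivative w' x) (at x within {0..1})" if x: "x \<in> {0..1}" for x
    proof -
      have "(vk has_real_derivative vk' x) (at x within {0..1})" "(vj has_real_derivative vj' x) (at x within {0..1})"
        using sol_j(1) sol_k(1) x unfolding solves_ode_def by auto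
      then have "((\<lambda>x. vk x - vj x) has_real_derivative (vk' x - vj' x)) (at x within {0..1})"
        by (rule DERIV_diff)
      then show ?thesis unfolding w_def w'_def by (rule DERIV_cdivide)
    qed
    show "\<theta> 0 = 0" by (rule theta0)
    show "w' 1 = 0" using sol_j sol_k by (simp add: w'_def)
  qed
  have diff: "vk x - vj x = a * (\<rho> x * cos (\<theta> x))" if "x \<in> {0..1}" for x
    using P.pol[OF that] a by (simp add: w_def field_simps)
  have "sin (\<theta> 1) = 0" using P.pol[of 1] P.d1 by auto
  then obtain n' where n': "\<theta> 1 = of_int n' * pi" by (auto simp: sin_zero_iff_int2)
  have m1: "P.m 1 = n'" unfolding P.m_def n' by simp
  have m0: "P.m 0 = 0" by (simp add: P.m_def theta0)
  have mr: "0 \<le> P.m x \<and> P.m x \<le> n'" if "x \<in> {0..1}" for x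
    using P.m_mono[of 0 x] P.m_mono[of x 1] that m0 m1 by auto
  have n'0: "n' \<ge> 0" using mr[of 1] m1 by simp
  define N where "N = nat n'"
  define S where "S = {enat k | k. \<exists>xs :: nat \<Rightarrow> real.
      (\<forall>i\<le>k. 0 \<le> xs i \<and> xs i \<le> 1) \<and>
      (\<forall>i<k. xs i < xs (Suc i) \<and> (vk (xs i) - vj (xs i)) * (vk (xs (Suc i)) - vj (xs (Suc i))) < 0)}"
  have sc: "sign_changes (\<lambda>x. vk x - vj x) = Sup S" unfolding sign_changes_def S_def by simp
  have upper: "z \<le> enat N" if zS: "z \<in> S" for z
  proof -
    obtain k xs where z: "z = enat k" and xs01: "\<forall>i\<le>k. 0 \<le> xs i \<and> xs i \<le> 1"
      and xsc: "\<forall>i<k. xs i < xs (Suc i) \<and> (vk (xs i) - vj (xs i)) * (vk (xs (Suc i)) - vj (xs (Suc i))) < 0"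
      using zS unfolding S_def by blast
    have step: "P.m (xs i) + 1 \<le> P.m (xs (Suc i))" if i: "i < k" for i
    proof -
      have x1: "xs i \<in> {0..1}" and x2: "xs (Suc i) \<in> {0..1}" using xs01 i by auto
      have lt: "xs i < xs (Suc i)" and pr: "(vk (xs i) - vj (xs i)) * (vk (xs (Suc i)) - vj (xs (Suc i))) < 0"
        using xsc i by auto
      have "(vk (xs i) - vj (xs i)) * (vk (xs (Suc i)) - vj (xs (Suc i)))
        = (a * a * \<rho> (xs i) * \<rho> (xs (Suc i))) * (cos (\<theta> (xs i)) * cos (\<theta> (xs (Suc i))))"
        using diff[OF x1] diff[OF x2] by (simp add: algebra_simps)
      moreover have "a * a * \<rho> (xs i) * \<rho> (xs (Suc i)) > 0" using a P.pol[OF x1] P.pol[OF x2] by simp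
      ultimately have "cos (\<theta> (xs i)) * cos (\<theta> (xs (Suc i))) < 0" using pr
        by (metis mult_less_cancel_left_pos mult_zero_right)
      then have "P.m (xs i) \<noteq> P.m (xs (Suc i))" using P.m_same_sign by force
      moreover have "P.m (xs i) \<le> P.m (xs (Suc i))" using P.m_mono[OF x1 x2] lt by simp
      ultimately show ?thesis by simp
    qed
    have ind: "i \<le> k \<longrightarrow> P.m (xs 0) + int i \<le> P.m (xs i)" for i
    proof (induction i)
      case 0 then show ?case by simp
    next
      case (Suc i) then show ?case using step[of i] by auto
    qed
    have "P.m (xs 0) + int k \<le> P.m (xs k)" using ind by simp
    moreover have "0 \<le> P.m (xs 0)" "P.m (xs k) \<le> n'" using mr xs01 by auto
    ultimately have "int k \<le> n'" by simp
    then show ?thesis using z by (simp add: N_def)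
  qed
  have lower: "enat N \<in> S"
  proof -
    have "\<forall>i\<le>N. \<exists>s. s \<in> {0..1} \<and> \<theta> s = real i * pi"
    proof (intro allI impI)
      fix i assume i: "i \<le> N"
      have "real i * pi \<le> \<theta> 1" using i n'0 by (simp add: n' N_def mult_right_mono)
      moreover have "\<theta> 0 \<le> real i * pi" using theta0 by simp
      ultimately obtain s where "0 \<le> s" "s \<le> 1" "\<theta> s = real i * pi"
        using IVT'[of \<theta> 0 "real i * pi" 1] theta_cont by auto
      then show "\<exists>s. s \<in> {0..1} \<and> \<theta> s = real i * pi" by auto
    qed
    then obtain s where s: "\<And>i. i \<le> N \<Longrightarrow> s i \<in> {0..1} \<and> \<theta> (s i) = real i * pi" by metis
    have ms: "P.m (s i) = int i" if "i \<le> N" for i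
    proof -
      have "\<theta> (s i) / pi = of_int (int i)" using s[OF that] by simp
      then show ?thesis unfolding P.m_def by simp
    qed
    have "(\<forall>i\<le>N. 0 \<le> s i \<and> s i \<le> 1) \<and>
      (\<forall>i<N. s i < s (Suc i) \<and> (vk (s i) - vj (s i)) * (vk (s (Suc i)) - vj (s (Suc i))) < 0)"
    proof (intro conjI allI impI)
      fix i assume "i \<le> N" then show "0 \<le> s i" "s i \<le> 1" using s by auto
    next
      fix i assume i: "i < N"
      have x1: "s i \<in> {0..1}" and x2: "s (Suc i) \<in> {0..1}" using s i by auto
      show "s i < s (Suc i)"
      proof (rule ccontr)
        assume "\<not> s i < s (Suc i)"
        then have "P.m (s (Suc i)) \<le> P.m (s i)" using P.m_mono[OF x2 x1] by simp
        then show False using ms[of i] ms[of "Suc i"] i by simp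
      qed
      have "(vk (s i) - vj (s i)) * (vk (s (Suc i)) - vj (s (Suc i)))
        = (a * a * \<rho> (s i) * \<rho> (s (Suc i))) * (cos (\<theta> (s i)) * cos (\<theta> (s (Suc i))))"
        using diff[OF x1] diff[OF x2] by (simp add: algebra_simps)
      also have "cos (\<theta> (s i)) * cos (\<theta> (s (Suc i))) = -1"
        using s[of i] s[of "Suc i"] i by (simp only: cos_npi neg1_pow_prod)
      finally show "(vk (s i) - vj (s i)) * (vk (s (Suc i)) - vj (s (Suc i))) < 0"
        using a P.pol[OF x1] P.pol[OF x2] by simp
    qed
    then show ?thesis unfolding S_def by blast
  qed
  have "Sup S = enat N"
    by (rule antisym) (auto intro: Sup_least Sup_upper upper lower)
  moreover have "\<theta> 1 / pi = real N" using n' n'0 by (simp add: N_def)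
  ultimately show ?thesis using sc by (intro exI[of _ N]) simp
qed

end
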